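(* Let $n\ge 2$ and let $g_1,g_2\in\hat S_n$ be glides with offsets $k_1$ and $k_2$ respectively. Then $$g_2g_1=\rho^{k_2}(g_1)\,\rho^{-k_1}(g_2).$$
   Context: The affine symmetric group $\hat S_n$ is generated by $s_0,s_1,\dots,s_{n-1}$ (indices taken modulo $n$) subject to $s_i^2=1$, $s_is_js_i=s_js_is_j$ if $i-j\equiv\pm1\pmod n$, and $s_is_j=s_js_i$ if $i-j\not\equiv 0,\pm1\pmod n$. Let $\rho:\hat S_n\to\hat S_n$ be the automorphism with $\rho(s_i)=s_{i+1}$ for all $i$. Let $\phi:\hat S_n\to S_n$ be the homomorphism with $\phi(s_i)=(i\ \ i+1)$ for $1\le i\le n-1$ and $\phi(s_0)=(1\ \ n)$. An element $g\in\hat S_n$ is a glide if for some $k\in\{0,1,\dots,n-1\}$ the permutation $\phi(g)$ sends $j\mapsto j+k$ for $1\le j\le n-k$ and $j\mapsto j+k-n$ for $n-k<j\le n$; this $k$ is the offset of $g$. *)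

theory Defs
  imports "HOL-Combinatorics.Transposition"
begin

text \<open>Elements of the affine symmetric group are represented by words over the
generator indices 0..n-1; the word [i1,...,im] stands for s_i1 s_i2 ... s_im.
Two words represent the same group element iff they are related by the
congruence generated by the defining relations of the presentation.\<close>

definition adj_mod :: "nat \<Rightarrow> nat \<Rightarrow> nat \<Rightarrow> bool" where
  "adj_mod n i j \<longleftrightarrow> (int i - int j) mod int n = 1 \<or> (int i - int j) mod int n = (int n - 1) mod int n"

inductive aff_rel :: "nat \<Rightarrow> nat list \<Rightarrow> nat list \<Rightarrow> bool" for n where
  inv: "i < n \<Longrightarrow> aff_rel n [i, i] []"
| braid: "i < n \<Longrightarrow> j < n \<Longrightarrow> adj_mod n i j \<Longrightarrow> aff_rel n [i, j, i] [j, i, j]"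
| comm: "i < n \<Longrightarrow> j < n \<Longrightarrow> (int i - int j) mod int n \<noteq> 0 \<Longrightarrow> \<not> adj_mod n i j
          \<Longrightarrow> aff_rel n [i, j] [j, i]"

inductive aff_eq :: "nat \<Rightarrow> nat list \<Rightarrow> nat list \<Rightarrow> bool" for n where
  refl: "aff_eq n w w"
| sym: "aff_eq n u w \<Longrightarrow> aff_eq n w u"
| trans: "aff_eq n u v \<Longrightarrow> aff_eq n v w \<Longrightarrow> aff_eq n u w"
| ctx: "aff_rel n l r \<Longrightarrow> aff_eq n (u @ l @ v) (u @ r @ v)"

definition aff_word :: "nat \<Rightarrow> nat list \<Rightarrow> bool" where
  "aff_word n w \<longleftrightarrow> set w \<subseteq> {..<n}"

definition rho_pow :: "nat \<Rightarrow> int \<Rightarrow> nat list \<Rightarrow> nat list" where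
  "rho_pow n k w = map (\<lambda>i. nat ((int i + k) mod int n)) w"

definition phi_gen :: "nat \<Rightarrow> nat \<Rightarrow> nat \<Rightarrow> nat" where
  "phi_gen n i = (if i = 0 then transpose 1 n else transpose i (i + 1))"

definition phi :: "nat \<Rightarrow> nat list \<Rightarrow> nat \<Rightarrow> nat" where
  "phi n w = foldr (\<lambda>i f. phi_gen n i \<circ> f) w id"

definition glide_offset :: "nat \<Rightarrow> nat list \<Rightarrow> nat \<Rightarrow> bool" where
  "glide_offset n w k \<longleftrightarrow> k < n \<and>
     (\<forall>j. 1 \<le> j \<and> j \<le> n - k \<longrightarrow> phi n w j = j + k) \<and>
     (\<forall>j. n - k < j \<and> j \<le> n \<longrightarrow> phi n w j = j + k - n)"

end

theory Submission
  imports Defs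
begin

lemma aff_eq_rel: "aff_rel n l r \<Longrightarrow> aff_eq n l r"
  using aff_eq.ctx[of n l r "[]" "[]"] by simp

lemma aff_eq_app_right: "aff_eq n u u' \<Longrightarrow> aff_eq n (u @ v) (u' @ v)"
proof (induction rule: aff_eq.induct)
  case (refl w) then show ?case by (rule aff_eq.refl)
next
  case (sym u w) then show ?case using aff_eq.sym by blast
next
  case (trans u v' w) then show ?case using aff_eq.trans by blast
next
  case (ctx l r a b) then show ?case using aff_eq.ctx[of n l r a "b @ v"] by simp
qed

lemma aff_eq_app_left: "aff_eq n v v' \<Longrightarrow> aff_eq n (w @ v) (w @ v')"
proof (induction rule: aff_eq.induct)
  case (refl x) then show ?case by (rule aff_eq.refl)
next
  case (sym u x) then show ?case using aff_eq.sym by blast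
next
  case (trans u v' x) then show ?case using aff_eq.trans by blast
next
  case (ctx l r a b) then show ?case using aff_eq.ctx[of n l r "w @ a" b] by simp
qed

lemma aff_eq_app: "aff_eq n u u' \<Longrightarrow> aff_eq n v v' \<Longrightarrow> aff_eq n (u @ v) (u' @ v')"
  by (metis aff_eq.trans aff_eq_app_left aff_eq_app_right)

lemma aff_eq_trans' [trans]: "aff_eq n u v \<Longrightarrow> aff_eq n v w \<Longrightarrow> aff_eq n u w"
  by (rule aff_eq.trans)

lemma aff_eq_rev: "aff_eq n u v \<Longrightarrow> aff_eq n (rev u) (rev v)"
proof (induction rule: aff_eq.induct)
  case (refl w) then show ?case by (rule aff_eq.refl)
next
  case (sym u w) then show ?case using aff_eq.sym by blast
next
  case (trans u v' w) then show ?case using aff_eq.trans by blast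
next
  case (ctx l r a b)
  have "aff_eq n (rev l) (rev r)"
    using ctx(1)
  proof cases
    case (inv i) then show ?thesis using aff_eq_rel[OF ctx(1)] by simp
  next
    case (braid i j) then show ?thesis using aff_eq_rel[OF ctx(1)] by simp
  next
    case (comm i j) then show ?thesis using aff_eq_rel[OF ctx(1)] by (simp add: aff_eq.sym)
  qed
  then have "aff_eq n (rev l @ rev a) (rev r @ rev a)" by (rule aff_eq_app_right)
  then show ?case by (simp add: aff_eq_app_left)
qed

lemma aff_eq_cancel: "set w \<subseteq> {..<n} \<Longrightarrow> aff_eq n (w @ rev w) []"
proof (induction w)
  case Nil then show ?case by (simp add: aff_eq.refl)
next
  case (Cons i w)
  then have i: "i < n" by auto
  have "aff_eq n (i # (w @ rev w) @ [i]) ([i] @ [] @ [i])"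
    using aff_eq_app[OF aff_eq.refl[of n "[i]"] aff_eq_app_right[OF Cons.IH, of "[i]"]] Cons.prems by simp
  also have "aff_eq n ([i] @ [] @ [i]) []" using aff_eq_rel[OF aff_rel.inv[OF i]] by simp
  finally show ?case by simp
qed

context
  fixes n :: nat
  assumes n2: "2 \<le> n"
begin

lemma far_comm:
  assumes "1 \<le> a" "a < n" "1 \<le> b" "b < n" "a + 2 \<le> b \<or> b + 2 \<le> a"
  shows "aff_eq n [a, b] [b, a]"
proof -
  have nz: "(int a - int b) mod int n \<noteq> 0" and na: "\<not> adj_mod n a b"
  proof -
    have m1: "(int n - 1) mod int n = int n - 1" by (rule mod_pos_pos_trivial) (use n2 in auto)
    consider "a + 2 \<le> b" | "b + 2 \<le> a" using assms by blast
    then have "(int a - int b) mod int n \<noteq> 0 \<and> (int a - int b) mod int n \<noteq> 1 \<and> (int a - int b) mod int n \<noteq> int n - 1"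
    proof cases
      case 1
      have "(int a - int b) mod int n = (int a - int b + int n) mod int n" by simp
      also have "\<dots> = int a - int b + int n" using 1 assms by (intro mod_pos_pos_trivial) auto
      finally show ?thesis using 1 assms by simp
    next
      case 2
      have "(int a - int b) mod int n = int a - int b" using 2 assms by (intro mod_pos_pos_trivial) auto
      then show ?thesis using 2 assms by simp
    qed
    then show "(int a - int b) mod int n \<noteq> 0" "\<not> adj_mod n a b" unfolding adj_mod_def using m1 by auto
  qed
  show ?thesis by (rule aff_eq_rel[OF aff_rel.comm]) (use assms nz na in auto)
qed

lemma braid_up:
  assumes "1 \<le> i" "i + 1 < n"
  shows "aff_eq n [i + 1, i, i + 1] [i, i + 1, i]"
proof -
  have "adj_mod n (i + 1) i" unfolding adj_mod_def using n2 by simp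
  then show ?thesis by (intro aff_eq_rel aff_rel.braid) (use assms in auto)
qed

lemma aff_eq_mid: "aff_eq n u v \<Longrightarrow> aff_eq n (p @ u @ q) (p @ v @ q)"
  by (intro aff_eq_app aff_eq.refl)

lemma comm_list:
  assumes "1 \<le> a" "a < n" "\<forall>b\<in>set L. 1 \<le> b \<and> b < n \<and> (a + 2 \<le> b \<or> b + 2 \<le> a)"
  shows "aff_eq n ([a] @ L) (L @ [a])"
  using assms(3)
proof (induction L)
  case Nil then show ?case by (simp add: aff_eq.refl)
next
  case (Cons b L)
  have "aff_eq n ([a] @ (b # L)) ([a, b] @ L)" by (simp add: aff_eq.refl)
  also have "aff_eq n ([a, b] @ L) ([b, a] @ L)"
    using Cons.prems assms by (intro aff_eq_app_right far_comm) auto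
  also have "aff_eq n ([b, a] @ L) ([b] @ ([a] @ L))" by (simp add: aff_eq.refl)
  also have "aff_eq n ([b] @ ([a] @ L)) ([b] @ (L @ [a]))"
    using Cons by (intro aff_eq_app_left) auto
  finally show ?case by simp
qed

definition Dn :: "nat \<Rightarrow> nat \<Rightarrow> nat list" where
  "Dn m j = rev [j..<m]"

lemma R_lemma:
  assumes "1 \<le> j" "j < i" "i < m" "m \<le> n"
  shows "aff_eq n (Dn m j @ [i]) ([i - 1] @ Dn m j)"
proof -
  define A where "A = rev [i+1..<m]"
  define B where "B = rev [j..<i-1]"
  have "[j..<m] = [j..<i-1] @ [i-1, i] @ [i+1..<m]"
  proof -
    have "[j..<m] = [j..<i-1] @ [i-1..<m]" using assms upt_add_eq_append[of j "i-1" "m-(i-1)"] by simp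
    also have "[i-1..<m] = [i-1, i] @ [i+1..<m]"
    proof -
      have "[i-1..<m] = (i-1) # [Suc (i-1)..<m]" using assms by (intro upt_conv_Cons) auto
      also have "Suc (i-1) = i" using assms by auto
      also have "[i..<m] = i # [Suc i..<m]" using assms by (intro upt_conv_Cons) auto
      finally show ?thesis by simp
    qed
    finally show ?thesis .
  qed
  then have D: "Dn m j = A @ [i, i-1] @ B" unfolding Dn_def A_def B_def by simp
  have Bi: "aff_eq n (B @ [i]) ([i] @ B)"
    by (rule aff_eq.sym, rule comm_list) (use assms in \<open>auto simp: B_def\<close>)
  have Ai: "aff_eq n ([i-1] @ A) (A @ [i-1])"
    by (rule comm_list) (use assms in \<open>auto simp: A_def\<close>)
  have br: "aff_eq n [i, i-1, i] [i-1, i, i-1]"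
    using braid_up[of "i-1"] assms by simp
  have "aff_eq n (Dn m j @ [i]) ((A @ [i, i-1]) @ (B @ [i]) @ [])" using D by (simp add: aff_eq.refl)
  also have "aff_eq n \<dots> ((A @ [i, i-1]) @ ([i] @ B) @ [])" by (rule aff_eq_mid[OF Bi])
  also have "aff_eq n \<dots> (A @ [i, i-1, i] @ B)" by (simp add: aff_eq.refl)
  also have "aff_eq n \<dots> (A @ [i-1, i, i-1] @ B)" by (rule aff_eq_mid[OF br])
  also have "aff_eq n \<dots> ([] @ (A @ [i-1]) @ ([i, i-1] @ B))" by (simp add: aff_eq.refl)
  also have "aff_eq n \<dots> ([] @ ([i-1] @ A) @ ([i, i-1] @ B))" by (rule aff_eq_mid[OF aff_eq.sym[OF Ai]])
  also have "aff_eq n \<dots> ([i - 1] @ Dn m j)" using D by (simp add: aff_eq.refl)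
  finally show ?thesis .
qed

lemma adj_iff:
  assumes "i < n" "j < n"
  shows "adj_mod n i j \<longleftrightarrow> (i = j + 1 \<or> j = i + 1 \<or> (i = 0 \<and> j = n - 1) \<or> (j = 0 \<and> i = n - 1))"
proof -
  have m1: "(int n - 1) mod int n = int n - 1" by (rule mod_pos_pos_trivial) (use n2 in auto)
  have md: "(int i - int j) mod int n = (if j \<le> i then int i - int j else int i - int j + int n)"
  proof (cases "j \<le> i")
    case True then show ?thesis using assms by (simp add: mod_pos_pos_trivial)
  next
    case False
    have "(int i - int j) mod int n = (int i - int j + int n) mod int n" by simp
    also have "\<dots> = int i - int j + int n" using False assms by (intro mod_pos_pos_trivial) auto
    finally show ?thesis using False by simp
  qed
  show ?thesis unfolding adj_mod_def md m1 using assms n2 by (cases "j \<le> i") auto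
qed

lemma phi_nil [simp]: "phi n [] = id"
  by (simp add: phi_def)

lemma phi_cons [simp]: "phi n (i # w) = phi_gen n i \<circ> phi n w"
  by (simp add: phi_def)

lemma phi_append [simp]: "phi n (u @ v) = phi n u \<circ> phi n v"
  by (induction u) (auto simp: comp_assoc)

lemma pg_alt: "phi_gen n i = transpose (if i = 0 then n else i) (i + 1)"
  by (simp add: phi_gen_def transpose_commute)

lemma tri_transpose:
  assumes "P = transpose a b" "Q = transpose b c" "a \<noteq> b" "b \<noteq> c"
  shows "P \<circ> (Q \<circ> (P \<circ> id)) = Q \<circ> (P \<circ> (Q \<circ> id))"
  unfolding assms(1,2) using assms(3,4) by (auto simp: fun_eq_iff transpose_def)

lemma disj_transpose:
  assumes "a \<noteq> c" "a \<noteq> d" "b \<noteq> c" "b \<noteq> d"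
  shows "transpose a b \<circ> (transpose c d \<circ> id) = transpose c d \<circ> (transpose a b \<circ> id)"
  using assms by (auto simp: fun_eq_iff transpose_def)

lemma phi_braid_aux1:
  assumes "j < n" "j = i + 1 \<or> (i = 0 \<and> j = n - 1)"
  shows "phi_gen n i \<circ> (phi_gen n j \<circ> (phi_gen n i \<circ> id)) = phi_gen n j \<circ> (phi_gen n i \<circ> (phi_gen n j \<circ> id))"
proof -
  consider "j = i + 1" "i = 0" | "j = i + 1" "i \<noteq> 0" | "i = 0" "j = n - 1" using assms by blast
  then show ?thesis
  proof cases
    case 1 then show ?thesis using n2 by (intro tri_transpose[of _ n 1 _ "j+1"]) (auto simp: phi_gen_def transpose_commute)
  next
    case 2 then show ?thesis by (intro tri_transpose[of _ i "i+1" _ "i+2"]) (auto simp: phi_gen_def)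
  next
    case 3 then show ?thesis using n2
      by (intro tri_transpose[of _ 1 n _ "n-1"]) (auto simp: phi_gen_def transpose_commute)
  qed
qed

lemma phi_braid_aux:
  assumes "i < n" "j < n" "i = j + 1 \<or> j = i + 1 \<or> (i = 0 \<and> j = n - 1) \<or> (j = 0 \<and> i = n - 1)"
  shows "phi_gen n i \<circ> (phi_gen n j \<circ> (phi_gen n i \<circ> id)) = phi_gen n j \<circ> (phi_gen n i \<circ> (phi_gen n j \<circ> id))"
proof -
  consider "j = i + 1 \<or> (i = 0 \<and> j = n - 1)" | "i = j + 1 \<or> (j = 0 \<and> i = n - 1)" using assms(3) by blast
  then show ?thesis
  proof cases
    case 1 then show ?thesis using phi_braid_aux1 assms by blast
  next
    case 2 then show ?thesis using phi_braid_aux1[of i j] assms by metis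
  qed
qed

lemma phi_comm_aux:
  assumes "i < n" "j < n" "i \<noteq> j" "\<not>(i = j + 1 \<or> j = i + 1 \<or> (i = 0 \<and> j = n - 1) \<or> (j = 0 \<and> i = n - 1))"
  shows "phi_gen n i \<circ> (phi_gen n j \<circ> id) = phi_gen n j \<circ> (phi_gen n i \<circ> id)"
  unfolding pg_alt by (rule disj_transpose) (use assms in auto)

lemma phi_inv: "aff_eq n u v \<Longrightarrow> phi n u = phi n v"
proof (induction rule: aff_eq.induct)
  case (refl w) show ?case ..
next
  case (sym u w) then show ?case by simp
next
  case (trans u v w) then show ?case by simp
next
  case (ctx l r a b)
  have "phi n l = phi n r" using ctx(1)
  proof cases
    case (inv i) then show ?thesis by (simp add: phi_gen_def)
  next
    case (braid i j)
    have c: "i = j + 1 \<or> j = i + 1 \<or> (i = 0 \<and> j = n - 1) \<or> (j = 0 \<and> i = n - 1)"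
      using adj_iff[of i j] braid(3,4,5) by simp
    show ?thesis unfolding braid(1,2) phi_def using phi_braid_aux[OF braid(3,4) c] by simp
  next
    case (comm i j)
    then have ij: "i \<noteq> j" by auto
    have c: "\<not> (i = j + 1 \<or> j = i + 1 \<or> (i = 0 \<and> j = n - 1) \<or> (j = 0 \<and> i = n - 1))"
      using adj_iff[of i j] comm(3,4,6) by simp
    show ?thesis unfolding comm(1,2) phi_def using phi_comm_aux[OF comm(3,4) ij c] by simp
  qed
  then show ?case by simp
qed

lemma phi_fix_big: "set u \<subseteq> {1..<k} \<Longrightarrow> k < x \<Longrightarrow> phi n u x = x"
  by (induction u) (auto simp: phi_gen_def)

lemma phi_Dn: "1 \<le> j \<Longrightarrow> j \<le> m \<Longrightarrow> phi n (Dn m j) j = m"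
proof (induction m)
  case 0 then show ?case by simp
next
  case (Suc m)
  show ?case
  proof (cases "j = Suc m")
    case True then show ?thesis by (simp add: Dn_def)
  next
    case False
    then have "j \<le> m" using Suc by simp
    then have "Dn (Suc m) j = m # Dn m j" by (simp add: Dn_def)
    then show ?thesis using Suc \<open>j \<le> m\<close> by (simp add: phi_gen_def)
  qed
qed

lemma decomp:
  assumes "1 \<le> m" "m \<le> n" "set v \<subseteq> {1..<m}"
  shows "\<exists>u j. set u \<subseteq> {1..<m-1} \<and> 1 \<le> j \<and> j \<le> m \<and> aff_eq n v (u @ Dn m j)"
  using assms(3)
proof (induction v rule: rev_induct)
  case Nil
  show ?case by (rule exI[of _ "[]"], rule exI[of _ m]) (use assms in \<open>auto simp: Dn_def aff_eq.refl\<close>)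
next
  case (snoc i v)
  then obtain u j where u: "set u \<subseteq> {1..<m-1}" "1 \<le> j" "j \<le> m" "aff_eq n v (u @ Dn m j)" by auto
  have i: "1 \<le> i" "i < m" using snoc by auto
  have vi: "aff_eq n (v @ [i]) (u @ Dn m j @ [i])" using aff_eq_app_right[OF u(4)] by simp
  consider "i + 1 = j" | "i = j" | "i + 2 \<le> j" | "j < i" by linarith
  then show ?case
  proof cases
    case 1
    have "Dn m j @ [i] = Dn m i" using 1 u i by (simp add: Dn_def upt_conv_Cons)
    then show ?thesis using vi u i by (intro exI[of _ u] exI[of _ i]) auto
  next
    case 2
    then have "Dn m j = Dn m (j+1) @ [j]" using i by (simp add: Dn_def upt_conv_Cons)
    then have "u @ Dn m j @ [i] = (u @ Dn m (j+1)) @ [j, j] @ []" using 2 by simp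
    also have "aff_eq n \<dots> ((u @ Dn m (j+1)) @ [] @ [])"
      by (rule aff_eq_mid, rule aff_eq_rel, rule aff_rel.inv) (use i 2 assms in auto)
    finally have "aff_eq n (v @ [i]) (u @ Dn m (j+1))" using vi aff_eq.trans by auto
    then show ?thesis using u i 2 by (intro exI[of _ u] exI[of _ "j+1"]) auto
  next
    case 3
    have "aff_eq n (Dn m j @ [i]) ([i] @ Dn m j)"
      by (rule aff_eq.sym, rule comm_list) (use i 3 assms in \<open>auto simp: Dn_def\<close>)
    then have "aff_eq n (v @ [i]) ((u @ [i]) @ Dn m j)"
      using vi aff_eq.trans aff_eq_app_left by fastforce
    then show ?thesis using u i 3 by (intro exI[of _ "u @ [i]"] exI[of _ j]) auto
  next
    case 4
    have "aff_eq n (Dn m j @ [i]) ([i-1] @ Dn m j)"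
      by (rule R_lemma) (use i 4 u assms in auto)
    then have "aff_eq n (v @ [i]) ((u @ [i-1]) @ Dn m j)"
      using vi aff_eq.trans aff_eq_app_left by fastforce
    then show ?thesis using u i 4 by (intro exI[of _ "u @ [i-1]"] exI[of _ j]) auto
  qed
qed

lemma Sn_kernel: "m \<le> n \<Longrightarrow> set v \<subseteq> {1..<m} \<Longrightarrow> phi n v = id \<Longrightarrow> aff_eq n v []"
proof (induction m arbitrary: v)
  case 0 then show ?case by (simp add: aff_eq.refl)
next
  case (Suc m)
  obtain u j where u: "set u \<subseteq> {1..<m}" "1 \<le> j" "j \<le> Suc m" "aff_eq n v (u @ Dn (Suc m) j)"
    using decomp[of "Suc m" v] Suc.prems by auto
  have "phi n v = phi n u \<circ> phi n (Dn (Suc m) j)" using phi_inv[OF u(4)] by simp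
  then have "phi n v j = phi n u (Suc m)" using phi_Dn u by simp
  also have "\<dots> = Suc m" using phi_fix_big[OF u(1)] by simp
  finally have "j = Suc m" using Suc.prems by simp
  then have "aff_eq n v u" using u(4) by (simp add: Dn_def)
  moreover have "phi n u = id" using phi_inv[OF \<open>aff_eq n v u\<close>] Suc.prems(3) by metis
  ultimately show ?case using Suc.IH[of u] u Suc.prems aff_eq.trans by auto
qed

lemma int_nat_mod: "int (nat ((x::int) mod int n)) = x mod int n"
  using n2 by simp

lemma rho_append [simp]: "rho_pow n k (u @ v) = rho_pow n k u @ rho_pow n k v"
  by (simp add: rho_pow_def)

lemma rho_Cons [simp]: "rho_pow n k (i # v) = nat ((int i + k) mod int n) # rho_pow n k v"
  by (simp add: rho_pow_def)

lemma rho_Nil [simp]: "rho_pow n k [] = []"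
  by (simp add: rho_pow_def)

lemma rho_letter: "nat ((int (nat ((int i + b) mod int n)) + a) mod int n) = nat ((int i + (a + b)) mod int n)"
proof -
  have "(int (nat ((int i + b) mod int n)) + a) mod int n = ((int i + b) mod int n + a) mod int n"
    by (simp only: int_nat_mod)
  also have "\<dots> = (int i + b + a) mod int n" by (rule mod_add_left_eq)
  also have "\<dots> = (int i + (a + b)) mod int n" by (simp add: algebra_simps)
  finally show ?thesis by simp
qed

lemma rho_comp [simp]: "rho_pow n a (rho_pow n b w) = rho_pow n (a + b) w"
  by (simp only: rho_pow_def map_map comp_def rho_letter)

lemma rho_zero: "set w \<subseteq> {..<n} \<Longrightarrow> rho_pow n 0 w = w"
  by (induction w) auto

lemma rho_valid: "set (rho_pow n k w) \<subseteq> {..<n}"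
proof -
  have "\<And>i. nat ((int i + k) mod int n) < n" using n2 by (simp add: nat_less_iff)
  then show ?thesis by (auto simp: rho_pow_def)
qed

lemma rho_inverse: "set w \<subseteq> {..<n} \<Longrightarrow> rho_pow n k (rho_pow n (- k) w) = w"
  by (simp add: rho_zero)

lemma rho_aff_eq: "aff_eq n u v \<Longrightarrow> aff_eq n (rho_pow n k u) (rho_pow n k v)"
proof (induction rule: aff_eq.induct)
  case (refl w) show ?case by (rule aff_eq.refl)
next
  case (sym u w) then show ?case using aff_eq.sym by blast
next
  case (trans u v w) then show ?case using aff_eq.trans by blast
next
  case (ctx l r a b)
  define f where "f = (\<lambda>i::nat. nat ((int i + k) mod int n))"
  have fl: "\<And>i. f i < n" using n2 by (simp add: f_def nat_less_iff)
  have fd: "\<And>i j. (int (f i) - int (f j)) mod int n = (int i - int j) mod int n"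
  proof -
    fix i j
    have "(int (f i) - int (f j)) mod int n = ((int i + k) mod int n - (int j + k) mod int n) mod int n"
      unfolding f_def by (simp only: int_nat_mod)
    also have "\<dots> = ((int i + k) - (int j + k)) mod int n" by (rule mod_diff_eq)
    also have "\<dots> = (int i - int j) mod int n" by simp
    finally show "(int (f i) - int (f j)) mod int n = (int i - int j) mod int n" .
  qed
  have adj: "\<And>i j. adj_mod n (f i) (f j) = adj_mod n i j" unfolding adj_mod_def fd ..
  have "aff_rel n (rho_pow n k l) (rho_pow n k r)" using ctx(1)
  proof cases
    case (inv i)
    have e: "rho_pow n k l = [f i, f i]" "rho_pow n k r = []" unfolding inv(1,2) f_def by simp_all
    show ?thesis unfolding e by (rule aff_rel.inv[OF fl])
  next
    case (braid i j)
    have e: "rho_pow n k l = [f i, f j, f i]" "rho_pow n k r = [f j, f i, f j]"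
      unfolding braid(1,2) f_def by simp_all
    have "adj_mod n (f i) (f j)" unfolding adj by (rule braid(5))
    then show ?thesis unfolding e by (rule aff_rel.braid[OF fl fl])
  next
    case (comm i j)
    have e: "rho_pow n k l = [f i, f j]" "rho_pow n k r = [f j, f i]"
      unfolding comm(1,2) f_def by simp_all
    have "\<not> adj_mod n (f i) (f j)" unfolding adj by (rule comm(6))
    moreover have "(int (f i) - int (f j)) mod int n \<noteq> 0" unfolding fd by (rule comm(5))
    ultimately show ?thesis unfolding e by (intro aff_rel.comm[OF fl fl])
  qed
  then show ?case by (simp add: aff_eq.ctx)
qed

section \<open>The extended group, as pairs (k, w) meaning tau^k w\<close>

definition emul :: "int \<times> nat list \<Rightarrow> int \<times> nat list \<Rightarrow> int \<times> nat list" where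
  "emul p q = (fst p + fst q, rho_pow n (- fst q) (snd p) @ snd q)"

definition EE :: "int \<times> nat list \<Rightarrow> int \<times> nat list \<Rightarrow> bool" where
  "EE p q \<longleftrightarrow> fst p = fst q \<and> aff_eq n (snd p) (snd q)"

lemma EE_refl [simp]: "EE p p"
  by (simp add: EE_def aff_eq.refl)

lemma EE_sym: "EE p q \<Longrightarrow> EE q p"
  by (simp add: EE_def aff_eq.sym)

lemma EE_trans [trans]: "EE p q \<Longrightarrow> EE q r \<Longrightarrow> EE p r"
  unfolding EE_def using aff_eq.trans by auto

lemma EE_eq_trans [trans]: "p = q \<Longrightarrow> EE q r \<Longrightarrow> EE p r" "EE p q \<Longrightarrow> q = r \<Longrightarrow> EE p r"
  by auto

lemma emul_cong: "EE p p' \<Longrightarrow> EE q q' \<Longrightarrow> EE (emul p q) (emul p' q')"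
  unfolding EE_def emul_def by (auto intro: aff_eq_app rho_aff_eq)

lemma emul_cong1: "EE p p' \<Longrightarrow> EE (emul p q) (emul p' q)"
  by (simp add: emul_cong)

lemma emul_cong2: "EE q q' \<Longrightarrow> EE (emul p q) (emul p q')"
  by (simp add: emul_cong)

lemma emul_assoc: "emul (emul p q) r = emul p (emul q r)"
  by (simp add: emul_def algebra_simps)

lemma emul_unit_left [simp]: "emul (0, []) p = p"
  by (simp add: emul_def)

lemma emul_unit_right: "set (snd p) \<subseteq> {..<n} \<Longrightarrow> emul p (0, []) = p"
  by (simp add: emul_def rho_zero)

lemma emul_words: "emul (0, u) (0, v) = (0, rho_pow n 0 u @ v)"
  by (simp add: emul_def)

lemma emul_words': "set u \<subseteq> {..<n} \<Longrightarrow> emul (0, u) (0, v) = (0, u @ v)"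
  by (simp add: emul_def rho_zero)

lemma EE_words: "aff_eq n u v \<Longrightarrow> EE (k, u) (k, v)"
  by (simp add: EE_def)

section \<open>Cyclic rotation of 1..n\<close>

definition cyc :: "int \<Rightarrow> nat \<Rightarrow> nat" where
  "cyc m j = (if 1 \<le> j \<and> j \<le> n then nat ((int j - 1 + m) mod int n) + 1 else j)"

lemma cyc_in: "1 \<le> j \<Longrightarrow> j \<le> n \<Longrightarrow> 1 \<le> cyc m j \<and> cyc m j \<le> n"
proof -
  have "nat ((int j - 1 + m) mod int n) < n" using n2 by (simp add: nat_less_iff)
  then show "1 \<le> j \<Longrightarrow> j \<le> n \<Longrightarrow> 1 \<le> cyc m j \<and> cyc m j \<le> n" by (simp add: cyc_def)
qed

lemma cyc_add: "cyc a (cyc b j) = cyc (a + b) j"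
proof (cases "1 \<le> j \<and> j \<le> n")
  case True
  have x0: "0 \<le> (int j - 1 + b) mod int n" using n2 by simp
  have "(int (nat ((int j - 1 + b) mod int n) + 1) - 1 + a) mod int n = ((int j - 1 + b) mod int n + a) mod int n"
    using x0 by simp
  also have "\<dots> = (int j - 1 + b + a) mod int n" by (rule mod_add_left_eq)
  finally have "nat ((int (nat ((int j - 1 + b) mod int n) + 1) - 1 + a) mod int n)
      = nat ((int j - 1 + (a + b)) mod int n)" by (simp add: algebra_simps)
  note F = this
  have ci: "1 \<le> cyc b j \<and> cyc b j \<le> n" using cyc_in True by blast
  have e1: "cyc a (cyc b j) = nat ((int (cyc b j) - 1 + a) mod int n) + 1"
    using ci unfolding cyc_def[of a "cyc b j"] by simp
  have e2: "cyc b j = nat ((int j - 1 + b) mod int n) + 1" using True unfolding cyc_def by simp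
  have e3: "cyc (a + b) j = nat ((int j - 1 + (a + b)) mod int n) + 1" using True unfolding cyc_def by simp
  show ?thesis by (simp only: e1 e3, simp only: e2 F)
next
  case False
  then have "cyc b j = j" "cyc a j = j" "cyc (a + b) j = j" by (auto simp: cyc_def)
  then show ?thesis by simp
qed

lemma cyc_comp: "cyc a \<circ> cyc b = cyc (a + b)"
  by (simp add: fun_eq_iff cyc_add)

lemma cyc_mod: "cyc (m mod int n) = cyc m"
  by (simp add: fun_eq_iff cyc_def mod_add_right_eq)

lemma cyc_zero: "cyc 0 = id"
proof -
  have "\<And>j. 1 \<le> j \<Longrightarrow> j \<le> n \<Longrightarrow> nat ((int j - 1) mod int n) + 1 = j"
    by (subst mod_pos_pos_trivial) auto
  then show ?thesis by (auto simp: fun_eq_iff cyc_def)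
qed

lemma cyc_mult: "cyc (int n * q) = id"
  by (metis cyc_mod cyc_zero mod_mult_self2_is_0 mult.commute)

lemma cyc_inv1: "cyc k \<circ> cyc (- k) = id" and cyc_inv2: "cyc (- k) \<circ> cyc k = id"
  by (simp_all add: cyc_comp cyc_zero)

lemma pg_cyc: "i < n \<Longrightarrow> phi_gen n i = transpose (cyc (int i) n) (cyc (int i + 1) n)"
proof -
  assume i: "i < n"
  have a: "cyc (int i) n = (if i = 0 then n else i)"
  proof -
    have "(int n - 1 + int i) mod int n = (if i = 0 then int n - 1 else int i - 1)"
    proof (cases "i = 0")
      case True
      have m1: "(int n - 1) mod int n = int n - 1" by (rule mod_pos_pos_trivial) (use n2 in auto)
      then show ?thesis using True by simp
    next
      case False
      have "(int n - 1 + int i) mod int n = (int i - 1 + int n) mod int n" by (simp add: algebra_simps)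
      also have "\<dots> = int i - 1" using False i by (simp add: mod_pos_pos_trivial)
      finally show ?thesis using False by simp
    qed
    then show ?thesis using n2 by (auto simp: cyc_def)
  qed
  have b: "cyc (int i + 1) n = i + 1"
  proof -
    have "int n - 1 + (int i + 1) = int i + int n" by simp
    then have "(int n - 1 + (int i + 1)) mod int n = int i mod int n" by (simp only: mod_add_self2)
    also have "\<dots> = int i" using i by (simp add: mod_pos_pos_trivial)
    finally have "(int n - 1 + (int i + 1)) mod int n = int i" .
    then show ?thesis using n2 by (simp add: cyc_def)
  qed
  show ?thesis unfolding a b by (rule pg_alt)
qed

lemma conj_transpose: "f \<circ> g = id \<Longrightarrow> g \<circ> f = id \<Longrightarrow> f \<circ> transpose a b \<circ> g = transpose (f a) (f b)"
proof
  fix x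
  assume fg: "f \<circ> g = id" and gf: "g \<circ> f = id"
  have 1: "\<And>y. f (g y) = y" using fg by (metis comp_apply id_apply)
  have 2: "\<And>y. g (f y) = y" using gf by (metis comp_apply id_apply)
  have 3: "\<And>y z. g y = z \<longleftrightarrow> y = f z" using 1 2 by metis
  show "(f \<circ> transpose a b \<circ> g) x = transpose (f a) (f b) x"
    by (simp add: transpose_def 1 3)
qed

lemma phi_gen_rho: "i < n \<Longrightarrow> phi_gen n (nat ((int i + k) mod int n)) = cyc k \<circ> phi_gen n i \<circ> cyc (- k)"
proof -
  assume i: "i < n"
  define i' where "i' = nat ((int i + k) mod int n)"
  have i'n: "i' < n" using n2 by (simp add: i'_def nat_less_iff)
  have ii': "int i' = (int i + k) mod int n" using n2 by (simp add: i'_def)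
  have "phi_gen n i' = transpose (cyc (int i') n) (cyc (int i' + 1) n)" by (rule pg_cyc[OF i'n])
  also have "cyc (int i') = cyc (int i + k)" unfolding ii' by (rule cyc_mod)
  also have "cyc (int i' + 1) = cyc (int i + k + 1)"
    by (metis cyc_mod ii' mod_add_left_eq)
  finally have 1: "phi_gen n i' = transpose (cyc (int i + k) n) (cyc (int i + k + 1) n)" .
  have "cyc k \<circ> phi_gen n i \<circ> cyc (- k) = transpose (cyc k (cyc (int i) n)) (cyc k (cyc (int i + 1) n))"
    unfolding pg_cyc[OF i] by (rule conj_transpose[OF cyc_inv1 cyc_inv2])
  also have "\<dots> = transpose (cyc (int i + k) n) (cyc (int i + k + 1) n)"
    by (simp add: cyc_add algebra_simps)
  finally show ?thesis using 1 i'_def by simp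
qed

lemma cyc_cancel1 [simp]: "cyc k (cyc (- k) y) = y"
  by (simp add: cyc_add cyc_zero)

lemma cyc_cancel2 [simp]: "cyc (- k) (cyc k y) = y"
  by (simp add: cyc_add cyc_zero)

lemma phi_rho: "set w \<subseteq> {..<n} \<Longrightarrow> phi n (rho_pow n k w) x = cyc k (phi n w (cyc (- k) x))"
proof (induction w arbitrary: x)
  case Nil then show ?case by simp
next
  case (Cons i w)
  have "phi n (rho_pow n k (i # w)) x = phi_gen n (nat ((int i + k) mod int n)) (phi n (rho_pow n k w) x)"
    by simp
  also have "\<dots> = (cyc k \<circ> phi_gen n i \<circ> cyc (- k)) (cyc k (phi n w (cyc (- k) x)))"
    using Cons by (simp add: phi_gen_rho)
  finally show ?case by simp
qed

definition phi_ext :: "int \<times> nat list \<Rightarrow> nat \<Rightarrow> nat" where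
  "phi_ext p = cyc (fst p) \<circ> phi n (snd p)"

lemma phi_ext_mul: "set (snd p) \<subseteq> {..<n} \<Longrightarrow> phi_ext (emul p q) = phi_ext p \<circ> phi_ext q"
proof
  fix x
  assume v: "set (snd p) \<subseteq> {..<n}"
  have "phi_ext (emul p q) x = cyc (fst p + fst q) (phi n (rho_pow n (- fst q) (snd p)) (phi n (snd q) x))"
    by (simp add: phi_ext_def emul_def)
  also have "\<dots> = cyc (fst p + fst q) (cyc (- fst q) (phi n (snd p) (cyc (fst q) (phi n (snd q) x))))"
    by (simp add: phi_rho[OF v])
  also have "\<dots> = cyc (fst p) (phi n (snd p) (cyc (fst q) (phi n (snd q) x)))"
    by (simp add: cyc_add)
  finally show "phi_ext (emul p q) x = (phi_ext p \<circ> phi_ext q) x" by (simp add: phi_ext_def)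
qed

lemma phi_ext_EE: "EE p q \<Longrightarrow> phi_ext p = phi_ext q"
  unfolding EE_def phi_ext_def using phi_inv by auto

lemma phi_fix_out: "set w \<subseteq> {..<n} \<Longrightarrow> x = 0 \<or> n < x \<Longrightarrow> phi n w x = x"
  by (induction w) (auto simp: phi_gen_def)

lemma glide_phi:
  assumes "set g \<subseteq> {..<n}" "glide_offset n g k"
  shows "phi n g = cyc (int k)"
proof
  fix j
  show "phi n g j = cyc (int k) j"
  proof (cases "1 \<le> j \<and> j \<le> n")
    case False then show ?thesis using phi_fix_out[OF assms(1), of j] by (auto simp: cyc_def)
  next
    case True
    show ?thesis
    proof (cases "j \<le> n - k")
      case le: True
      have "(int j - 1 + int k) mod int n = int j - 1 + int k"
        using True le assms(2) by (intro mod_pos_pos_trivial) (auto simp: glide_offset_def)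
      moreover have "nat (int j - 1 + int k) + 1 = j + k" using True by linarith
      ultimately show ?thesis using True le assms(2) by (simp add: cyc_def glide_offset_def)
    next
      case gt: False
      have "(int j - 1 + int k) mod int n = (int j - 1 + int k - int n + int n) mod int n" by simp
      also have "\<dots> = int j - 1 + int k - int n"
        using True gt assms(2) by (subst mod_add_self2, intro mod_pos_pos_trivial) (auto simp: glide_offset_def)
      moreover have "k < n" using assms(2) by (simp add: glide_offset_def)
      moreover have "nat (int j - 1 + int k - int n) + 1 = j + k - n" using True gt \<open>k < n\<close> by linarith
      ultimately show ?thesis using True gt assms(2) by (simp add: cyc_def glide_offset_def)
    qed
  qed
qed

section \<open>Translations\<close>

lemma set_Dn [simp]: "set (Dn m j) = {j..<m}"
  by (simp add: Dn_def)

lemma emul_fst [simp]: "fst (emul p q) = fst p + fst q"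
  by (simp add: emul_def)

lemma valid_emul: "set (snd q) \<subseteq> {..<n} \<Longrightarrow> set (snd (emul p q)) \<subseteq> {..<n}"
  using rho_valid by (auto simp: emul_def)

lemma W_app: "set u \<subseteq> {..<n} \<Longrightarrow> emul (0, u) (0, v) = (0, u @ v)"
  by (rule emul_words')

lemma EE_W: "aff_eq n u v \<Longrightarrow> EE (k, u) (k, v)"
  by (simp add: EE_def)

lemma W_cancel: "i < n \<Longrightarrow> EE (emul (0, [i]) (0, [i])) (0, [])"
  using W_app[of "[i]" "[i]"] by (simp add: EE_def aff_eq_rel aff_rel.inv)

lemma comm_prod:
  assumes "EE (emul a c) (emul c a)" "EE (emul b c) (emul c b)"
  shows "EE (emul (emul a b) c) (emul c (emul a b))"
proof -
  have "emul (emul a b) c = emul a (emul b c)" by (simp add: emul_assoc)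
  also have "EE \<dots> (emul a (emul c b))" by (rule emul_cong2[OF assms(2)])
  also have "emul a (emul c b) = emul (emul a c) b" by (simp add: emul_assoc)
  also have "EE \<dots> (emul (emul c a) b)" by (rule emul_cong1[OF assms(1)])
  also have "emul (emul c a) b = emul c (emul a b)" by (simp add: emul_assoc)
  finally show ?thesis .
qed

definition Cw :: "nat list" where "Cw = Dn n 1"

definition x1 :: "int \<times> nat list" where "x1 = (1, Cw)"

definition X :: "nat \<Rightarrow> int \<times> nat list" where
  "X j = emul (0, Dn j 1) (emul x1 (0, rev (Dn j 1)))"

lemma valid_Cw: "set Cw \<subseteq> {..<n}"
  by (auto simp: Cw_def)

lemma valid_x1: "set (snd x1) \<subseteq> {..<n}"
  using valid_Cw by (simp add: x1_def)

lemma valid_X: "j \<le> n \<Longrightarrow> set (snd (X j)) \<subseteq> {..<n}"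
  unfolding X_def by (intro valid_emul) auto

lemma rho_m1: "1 \<le> i \<Longrightarrow> i < n \<Longrightarrow> rho_pow n (-1) [i] = [i - 1]"
  by (simp add: mod_pos_pos_trivial nat_diff_distrib)

lemma sx1:
  assumes "2 \<le> i" "i < n"
  shows "EE (emul (0, [i]) x1) (emul x1 (0, [i]))"
proof -
  have 1: "emul (0, [i]) x1 = (1, [i - 1] @ Cw)" using rho_m1[of i] assms by (simp add: emul_def x1_def)
  have 2: "emul x1 (0, [i]) = (1, Cw @ [i])" using valid_Cw by (simp add: emul_def x1_def rho_zero)
  have "aff_eq n (Dn n 1 @ [i]) ([i - 1] @ Dn n 1)" by (rule R_lemma) (use assms in auto)
  then show ?thesis unfolding 1 2 by (simp add: EE_def Cw_def aff_eq.sym)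
qed

lemma sx1_words: "set u \<subseteq> {2..<n} \<Longrightarrow> EE (emul (0, u) x1) (emul x1 (0, u))"
proof (induction u)
  case Nil then show ?case using valid_x1 by (simp add: emul_unit_right)
next
  case (Cons i u)
  have "(0::int, i # u) = emul (0, [i]) (0, u)" using Cons.prems by (simp add: W_app)
  moreover have "EE (emul (emul (0, [i]) (0, u)) x1) (emul x1 (emul (0, [i]) (0, u)))"
    by (rule comm_prod) (use Cons sx1 in auto)
  ultimately show ?case by simp
qed

lemma X_Suc: "1 \<le> i \<Longrightarrow> i < n \<Longrightarrow> X (i + 1) = emul (0, [i]) (emul (X i) (0, [i]))"
proof -
  assume i: "1 \<le> i" "i < n"
  have d: "Dn (i + 1) 1 = [i] @ Dn i 1" using i by (simp add: Dn_def)
  have v: "set (Dn i 1) \<subseteq> {..<n}" "set (rev (Dn i 1)) \<subseteq> {..<n}" "set [i] \<subseteq> {..<n}" using i by auto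
  have "X (i + 1) = emul (emul (0, [i]) (0, Dn i 1)) (emul x1 (emul (0, rev (Dn i 1)) (0, [i])))"
    unfolding X_def d using v by (simp add: W_app)
  also have "\<dots> = emul (0, [i]) (emul (X i) (0, [i]))" by (simp add: X_def emul_assoc)
  finally show ?thesis .
qed

lemma unit_right_EE: "set (snd p) \<subseteq> {..<n} \<Longrightarrow> EE (emul p (0, [])) p"
  by (simp add: emul_unit_right)

lemma L1:
  assumes i: "1 \<le> i" "i < n" and j: "1 \<le> j" "j \<le> n"
  shows "EE (emul (0, [i]) (X j)) (emul (X (transpose i (i+1) j)) (0, [i]))"
proof -
  consider "j = i" | "j = i + 1" | "j < i" | "i + 1 < j" by linarith
  then show ?thesis
  proof cases
    case 1
    have vX: "set (snd (emul (0, [i]) (X i))) \<subseteq> {..<n}" using valid_X i by (intro valid_emul) auto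
    have "emul (X (i + 1)) (0, [i]) = emul (emul (0, [i]) (X i)) (emul (0, [i]) (0, [i]))"
      using X_Suc[OF i] by (simp add: emul_assoc)
    also have "EE \<dots> (emul (emul (0, [i]) (X i)) (0, []))" by (rule emul_cong2[OF W_cancel[OF i(2)]])
    also have "emul (emul (0, [i]) (X i)) (0, []) = emul (0, [i]) (X i)" using vX by (rule emul_unit_right)
    finally show ?thesis using 1 by (simp add: EE_sym)
  next
    case 2
    have "emul (0, [i]) (X j) = emul (emul (0, [i]) (0, [i])) (emul (X i) (0, [i]))"
      using X_Suc[OF i] 2 by (simp add: emul_assoc)
    also have "EE \<dots> (emul (0, []) (emul (X i) (0, [i])))" by (rule emul_cong1[OF W_cancel[OF i(2)]])
    finally show ?thesis using 2 by simp
  next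
    case 3
    define Q where "Q = Dn j 1"
    have Xj: "X j = emul (0, Q) (emul x1 (0, rev Q))" by (simp add: X_def Q_def)
    have vQ: "set Q \<subseteq> {..<n}" "set (rev Q) \<subseteq> {..<n}" using 3 i by (auto simp: Q_def)
    have c1: "aff_eq n ([i] @ Q) (Q @ [i])"
      by (rule comm_list) (use 3 i in \<open>auto simp: Q_def\<close>)
    have c2: "aff_eq n ([i] @ rev Q) (rev Q @ [i])"
      by (rule comm_list) (use 3 i in \<open>auto simp: Q_def\<close>)
    have "emul (0, [i]) (X j) = emul (emul (0, [i]) (0, Q)) (emul x1 (0, rev Q))"
      by (simp add: Xj emul_assoc)
    also have "emul (0, [i]) (0, Q) = (0, [i] @ Q)" using i by (simp add: W_app)
    also have "EE (emul (0, [i] @ Q) (emul x1 (0, rev Q))) (emul (0, Q @ [i]) (emul x1 (0, rev Q)))"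
      by (rule emul_cong1[OF EE_W[OF c1]])
    also have "(0::int, Q @ [i]) = emul (0, Q) (0, [i])" using vQ by (simp add: W_app)
    also have "emul (emul (0, Q) (0, [i])) (emul x1 (0, rev Q)) = emul (0, Q) (emul (emul (0, [i]) x1) (0, rev Q))"
      by (simp add: emul_assoc)
    also have "EE \<dots> (emul (0, Q) (emul (emul x1 (0, [i])) (0, rev Q)))"
      by (rule emul_cong2, rule emul_cong1, rule sx1) (use 3 i j in auto)
    also have "emul (0, Q) (emul (emul x1 (0, [i])) (0, rev Q)) = emul (0, Q) (emul x1 (emul (0, [i]) (0, rev Q)))"
      by (simp add: emul_assoc)
    also have "emul (0, [i]) (0, rev Q) = (0, [i] @ rev Q)" using i by (simp add: W_app)
    also have "EE (emul (0, Q) (emul x1 (0, [i] @ rev Q))) (emul (0, Q) (emul x1 (0, rev Q @ [i])))"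
      by (rule emul_cong2, rule emul_cong2, rule EE_W[OF c2])
    also have "(0::int, rev Q @ [i]) = emul (0, rev Q) (0, [i])" using vQ by (simp add: W_app)
    also have "emul (0, Q) (emul x1 (emul (0, rev Q) (0, [i]))) = emul (X j) (0, [i])"
      by (simp add: Xj emul_assoc)
    finally show ?thesis using 3 by simp
  next
    case 4
    define Q where "Q = Dn j 1"
    have Xj: "X j = emul (0, Q) (emul x1 (0, rev Q))" by (simp add: X_def Q_def)
    have vQ: "set Q \<subseteq> {..<n}" "set (rev Q) \<subseteq> {..<n}" using 4 j by (auto simp: Q_def)
    have c1: "aff_eq n ([i] @ Q) (Q @ [i + 1])"
    proof -
      have "aff_eq n (Dn j 1 @ [i + 1]) ([i + 1 - 1] @ Dn j 1)" by (rule R_lemma) (use 4 i j in auto)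
      then show ?thesis by (simp add: Q_def aff_eq.sym)
    qed
    have c2: "aff_eq n ([i + 1] @ rev Q) (rev Q @ [i])"
      using aff_eq_rev[OF c1] by (simp add: aff_eq.sym)
    have "emul (0, [i]) (X j) = emul (emul (0, [i]) (0, Q)) (emul x1 (0, rev Q))"
      by (simp add: Xj emul_assoc)
    also have "emul (0, [i]) (0, Q) = (0, [i] @ Q)" using i by (simp add: W_app)
    also have "EE (emul (0, [i] @ Q) (emul x1 (0, rev Q))) (emul (0, Q @ [i + 1]) (emul x1 (0, rev Q)))"
      by (rule emul_cong1[OF EE_W[OF c1]])
    also have "(0::int, Q @ [i + 1]) = emul (0, Q) (0, [i + 1])" using vQ by (simp add: W_app)
    also have "emul (emul (0, Q) (0, [i + 1])) (emul x1 (0, rev Q)) = emul (0, Q) (emul (emul (0, [i + 1]) x1) (0, rev Q))"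
      by (simp add: emul_assoc)
    also have "EE \<dots> (emul (0, Q) (emul (emul x1 (0, [i + 1])) (0, rev Q)))"
      by (rule emul_cong2, rule emul_cong1, rule sx1) (use 4 i j in auto)
    also have "emul (0, Q) (emul (emul x1 (0, [i + 1])) (0, rev Q)) = emul (0, Q) (emul x1 (emul (0, [i + 1]) (0, rev Q)))"
      by (simp add: emul_assoc)
    also have "emul (0, [i + 1]) (0, rev Q) = (0, [i + 1] @ rev Q)" using 4 j by (simp add: W_app)
    also have "EE (emul (0, Q) (emul x1 (0, [i + 1] @ rev Q))) (emul (0, Q) (emul x1 (0, rev Q @ [i])))"
      by (rule emul_cong2, rule emul_cong2, rule EE_W[OF c2])
    also have "(0::int, rev Q @ [i]) = emul (0, rev Q) (0, [i])" using vQ by (simp add: W_app)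
    also have "emul (0, Q) (emul x1 (emul (0, rev Q) (0, [i]))) = emul (X j) (0, [i])"
      by (simp add: Xj emul_assoc)
    finally show ?thesis using 4 by simp
  qed
qed

lemma phi_range: "set v \<subseteq> {..<n} \<Longrightarrow> 1 \<le> j \<Longrightarrow> j \<le> n \<Longrightarrow> 1 \<le> phi n v j \<and> phi n v j \<le> n"
  by (induction v) (auto simp: phi_gen_def transpose_def)

lemma L1w:
  assumes "set v \<subseteq> {1..<n}" "1 \<le> j" "j \<le> n"
  shows "EE (emul (0, v) (X j)) (emul (X (phi n v j)) (0, v))"
  using assms(1)
proof (induction v)
  case Nil
  have "emul (X j) (0, []) = X j" using valid_X assms by (simp add: emul_unit_right)
  then show ?case by simp
next
  case (Cons i v)
  have i: "1 \<le> i" "i < n" and v: "set v \<subseteq> {1..<n}" using Cons.prems by auto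
  have "set v \<subseteq> {..<n}" using v by auto
  then have r: "1 \<le> phi n v j" "phi n v j \<le> n" using phi_range assms(2,3) by auto
  have iv: "(0::int, i # v) = emul (0, [i]) (0, v)" using i by (simp add: W_app)
  have "emul (0, i # v) (X j) = emul (0, [i]) (emul (0, v) (X j))"
    unfolding iv by (simp add: emul_assoc)
  also have "EE \<dots> (emul (0, [i]) (emul (X (phi n v j)) (0, v)))"
    by (rule emul_cong2, rule Cons.IH[OF v])
  also have "\<dots> = emul (emul (0, [i]) (X (phi n v j))) (0, v)" by (simp add: emul_assoc)
  also have "EE \<dots> (emul (emul (X (transpose i (i+1) (phi n v j))) (0, [i])) (0, v))"
    by (rule emul_cong1, rule L1) (use i r in auto)
  also have "\<dots> = emul (X (phi n (i # v) j)) (0, i # v)"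
    unfolding iv using i by (simp add: emul_assoc phi_gen_def)
  finally show ?case .
qed

lemma X_one: "X 1 = x1"
  using valid_x1 by (simp add: X_def Dn_def emul_unit_right)

lemma upt_pred: "1 \<le> j \<Longrightarrow> map (\<lambda>i. i - 1) [j..<m] = [j - 1..<m - 1]"
proof -
  assume j: "1 \<le> j"
  have "[j..<m] = map Suc [j - 1..<m - 1]"
  proof (cases "m = 0")
    case True then show ?thesis by simp
  next
    case False then show ?thesis using j by (simp add: map_Suc_upt)
  qed
  then have "map (\<lambda>i. i - 1) [j..<m] = map ((\<lambda>i. i - 1) \<circ> Suc) [j - 1..<m - 1]" by (simp only: map_map)
  also have "(\<lambda>i. i - 1) \<circ> Suc = id" by auto
  finally show ?thesis by simp
qed

lemma Dn_pred: "1 \<le> j \<Longrightarrow> map (\<lambda>i. i - 1) (Dn m j) = Dn (m - 1) (j - 1)"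
  by (simp only: Dn_def rev_map[symmetric] upt_pred)

lemma rho_m1w: "set w \<subseteq> {1..<n} \<Longrightarrow> rho_pow n (-1) w = map (\<lambda>i. i - 1) w"
proof (induction w)
  case Nil then show ?case by simp
next
  case (Cons i w)
  then have "rho_pow n (-1) [i] = [i - 1]" by (intro rho_m1) auto
  then show ?case using Cons by simp
qed

lemma C_shift: "set L \<subseteq> {2..<n} \<Longrightarrow> aff_eq n (Cw @ L) (map (\<lambda>i. i - 1) L @ Cw)"
proof (induction L)
  case Nil then show ?case by (simp add: aff_eq.refl)
next
  case (Cons l L)
  then have l: "2 \<le> l" "l < n" and L: "set L \<subseteq> {2..<n}" by auto
  have "aff_eq n (Cw @ [l]) ([l - 1] @ Cw)" unfolding Cw_def by (rule R_lemma) (use l in auto)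
  then have "aff_eq n ((Cw @ [l]) @ L) (([l - 1] @ Cw) @ L)" by (rule aff_eq_app_right)
  also have "aff_eq n (([l - 1] @ Cw) @ L) ([l - 1] @ (map (\<lambda>i. i - 1) L @ Cw))"
    by (simp only: append_assoc, rule aff_eq_app_left, rule Cons.IH[OF L])
  finally show ?case by simp
qed

lemma cancel_mid: "a < n \<Longrightarrow> aff_eq n (p @ [a, a] @ q) (p @ q)"
  using aff_eq_mid[OF aff_eq_rel[OF aff_rel.inv], of a p q] by simp

lemma x1_X2: "EE (emul x1 (X 2)) (emul (X 2) x1)"
proof -
  have d1: "Dn 2 1 = [1]" by (simp add: Dn_def numeral_2_eq_2)
  have X2: "X 2 = (1, [0] @ Cw @ [1])"
    unfolding X_def d1 using valid_Cw rho_m1[of 1] n2 by (simp add: emul_def x1_def rho_zero)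
  have cw: "set Cw \<subseteq> {1..<n}" by (simp add: Cw_def)
  have rC: "rho_pow n (-1) Cw = Dn (n - 1) 1 @ [0]"
  proof -
    have "rho_pow n (-1) Cw = Dn (n - 1) 0" using rho_m1w[OF cw] Dn_pred[of 1 n] unfolding Cw_def by simp
    also have "\<dots> = Dn (n - 1) 1 @ [0]" using n2 by (simp add: Dn_def upt_conv_Cons)
    finally show ?thesis .
  qed
  have "(-1::int) mod int n = int n - 1" using n2 by (simp add: zmod_zminus1_eq_if)
  then have r0: "rho_pow n (-1) [0] = [n - 1]" using n2 by simp
  have r1: "rho_pow n (-1) [1] = [0]" using n2 by simp
  have C2: "Cw = Dn n 2 @ [1]" using n2 by (simp add: Cw_def Dn_def upt_conv_Cons numeral_2_eq_2)
  have C3: "Cw = [n - 1] @ Dn (n - 1) 1" using n2 by (simp add: Cw_def Dn_def upt_Suc_append[symmetric])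
  have L0: "emul x1 (X 2) = (2, rho_pow n (-1) Cw @ [0] @ Cw @ [1])"
    by (simp add: X2 x1_def emul_def)
  have L: "emul x1 (X 2) = (2, Dn (n - 1) 1 @ [0, 0] @ Dn n 2 @ [1, 1])"
    unfolding L0 rC by (subst C2) simp
  have R0: "emul (X 2) x1 = (2, rho_pow n (-1) [0] @ rho_pow n (-1) Cw @ rho_pow n (-1) [1] @ Cw)"
    by (simp only: X2 x1_def emul_def fst_conv snd_conv rho_append append_assoc one_add_one)
  have R1: "emul (X 2) x1 = (2, ([n - 1] @ Dn (n - 1) 1) @ [0, 0] @ Cw)"
    unfolding R0 r0 r1 rC by simp
  have R: "emul (X 2) x1 = (2, Cw @ [0, 0] @ Dn n 2 @ [1])"
    unfolding R1 C3[symmetric] by (subst (2) C2) simp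
  have m: "map (\<lambda>i. i - 1) (Dn n 2) = Dn (n - 1) 1" using Dn_pred[of 2 n] by simp
  have "aff_eq n (Dn (n - 1) 1 @ [0, 0] @ Dn n 2 @ [1, 1]) (Dn (n - 1) 1 @ Dn n 2 @ [1, 1])"
    by (rule cancel_mid) (use n2 in auto)
  also have "aff_eq n \<dots> ((Dn (n - 1) 1 @ Dn n 2) @ [1, 1] @ [])" by (simp add: aff_eq.refl)
  also have "aff_eq n \<dots> ((Dn (n - 1) 1 @ Dn n 2) @ [])" by (rule cancel_mid) (use n2 in auto)
  finally have A: "aff_eq n (Dn (n - 1) 1 @ [0, 0] @ Dn n 2 @ [1, 1]) (Dn (n - 1) 1 @ Dn n 2)" by simp
  have "aff_eq n (Cw @ [0, 0] @ Dn n 2 @ [1]) (Cw @ Dn n 2 @ [1])"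
    by (rule cancel_mid) (use n2 in auto)
  also have "aff_eq n (Cw @ Dn n 2 @ [1]) ((Cw @ Dn n 2) @ [1])" by (simp add: aff_eq.refl)
  also have "aff_eq n \<dots> ((Dn (n - 1) 1 @ Cw) @ [1])"
    by (rule aff_eq_app_right) (use C_shift[of "Dn n 2"] m in auto)
  also have "(Dn (n - 1) 1 @ Cw) @ [1] = Dn (n - 1) 1 @ [] @ Dn n 2 @ [1, 1]" using C2 by simp
  also have "aff_eq n \<dots> (Dn (n - 1) 1 @ Dn n 2)"
    using cancel_mid[of 1 "Dn (n - 1) 1 @ Dn n 2" "[]"] n2 by simp
  finally have B: "aff_eq n (Cw @ [0, 0] @ Dn n 2 @ [1]) (Dn (n - 1) 1 @ Dn n 2)" .
  have "aff_eq n (Dn (n - 1) 1 @ [0, 0] @ Dn n 2 @ [1, 1]) (Cw @ [0, 0] @ Dn n 2 @ [1])"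
    by (rule aff_eq.trans[OF A aff_eq.sym[OF B]])
  then show ?thesis unfolding L R EE_def by simp
qed

lemma x1_Xj:
  assumes "2 \<le> j" "j \<le> n"
  shows "EE (emul x1 (X j)) (emul (X j) x1)"
proof -
  define D where "D = Dn j 2"
  have D1: "Dn j 1 = D @ [1]" using assms by (simp add: D_def Dn_def upt_conv_Cons numeral_2_eq_2)
  have d1: "Dn 2 1 = [1]" by (simp add: Dn_def numeral_2_eq_2)
  have vD: "set D \<subseteq> {2..<n}" using assms by (auto simp: D_def)
  then have vD': "set D \<subseteq> {..<n}" "set (rev D) \<subseteq> {..<n}" by auto
  have e1: "(0::int, D @ [1]) = emul (0, D) (0, [1])" using vD' by (simp add: W_app)
  have e2: "(0::int, 1 # rev D) = emul (0, [1]) (0, rev D)" using n2 by (simp add: W_app)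
  have Xj: "X j = emul (0, D) (emul (X 2) (0, rev D))"
  proof -
    have r: "rev (D @ [1]) = 1 # rev D" "rev [1::nat] = [1]" by simp_all
    show ?thesis unfolding X_def D1 d1 r by (simp only: e1 e2 emul_assoc)
  qed
  have a: "EE (emul (0, D) x1) (emul x1 (0, D))" by (rule sx1_words[OF vD])
  have b1: "EE (emul (X 2) x1) (emul x1 (X 2))" by (rule EE_sym[OF x1_X2])
  have b2: "EE (emul (0, rev D) x1) (emul x1 (0, rev D))" by (rule sx1_words) (use vD in auto)
  have "EE (emul (X j) x1) (emul x1 (X j))"
    unfolding Xj by (rule comm_prod[OF a comm_prod[OF b1 b2]])
  then show ?thesis by (rule EE_sym)
qed

lemma Xcomm_lt:
  assumes "1 \<le> i" "i < j" "j \<le> n"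
  shows "EE (emul (X i) (X j)) (emul (X j) (X i))"
proof (cases "i = 1")
  case True
  then have Xi: "X i = x1" using X_one by simp
  show ?thesis unfolding Xi using x1_Xj[of j] assms True by simp
next
  case False
  define Q where "Q = Dn i 1"
  have Xi: "X i = emul (0, Q) (emul x1 (0, rev Q))" by (simp add: X_def Q_def)
  have vQ: "set Q \<subseteq> {1..<i}" "set (rev Q) \<subseteq> {1..<i}" by (auto simp: Q_def)
  have vQ': "set Q \<subseteq> {1..<n}" "set (rev Q) \<subseteq> {1..<n}" using vQ assms by auto
  have pQ: "phi n Q j = j" "phi n (rev Q) j = j" using phi_fix_big vQ assms by auto
  have a: "EE (emul (0, Q) (X j)) (emul (X j) (0, Q))"
    using L1w[OF vQ'(1), of j] pQ assms by simp
  have b2: "EE (emul (0, rev Q) (X j)) (emul (X j) (0, rev Q))"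
    using L1w[OF vQ'(2), of j] pQ assms by simp
  have b1: "EE (emul x1 (X j)) (emul (X j) x1)" by (rule x1_Xj) (use False assms in auto)
  show ?thesis unfolding Xi by (rule comm_prod[OF a comm_prod[OF b1 b2]])
qed

lemma Xcomm:
  assumes "1 \<le> i" "i \<le> n" "1 \<le> j" "j \<le> n"
  shows "EE (emul (X i) (X j)) (emul (X j) (X i))"
proof -
  consider "i < j" | "i = j" | "j < i" by linarith
  then show ?thesis
  proof cases
    case 1 then show ?thesis using Xcomm_lt assms by blast
  next
    case 2 then show ?thesis by simp
  next
    case 3 then show ?thesis using Xcomm_lt[of j i] assms by (blast intro: EE_sym)
  qed
qed

definition Xs :: "nat list \<Rightarrow> int \<times> nat list" where
  "Xs ls = foldr (\<lambda>j p. emul (X j) p) ls (0, [])"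

lemma Xs_Nil [simp]: "Xs [] = (0, [])" and Xs_Cons [simp]: "Xs (j # ls) = emul (X j) (Xs ls)"
  by (simp_all add: Xs_def)

lemma valid_Xs: "set (snd (Xs ls)) \<subseteq> {..<n}"
proof (induction ls)
  case Nil then show ?case by simp
next
  case (Cons a ls) then show ?case by (simp add: valid_emul)
qed

lemma Xs_snoc: "j \<le> n \<Longrightarrow> Xs (ls @ [j]) = emul (Xs ls) (X j)"
  by (induction ls) (auto simp: emul_assoc emul_unit_right valid_X)

lemma X_Xs_comm: "1 \<le> j \<Longrightarrow> j \<le> n \<Longrightarrow> set ls \<subseteq> {1..n} \<Longrightarrow> EE (emul (X j) (Xs ls)) (emul (Xs ls) (X j))"
proof (induction ls)
  case Nil then show ?case by (simp add: emul_unit_right valid_X)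
next
  case (Cons a ls)
  have "EE (emul (emul (X a) (Xs ls)) (X j)) (emul (X j) (emul (X a) (Xs ls)))"
    by (rule comm_prod, rule Xcomm, (use Cons.prems in auto)[4], rule EE_sym, rule Cons.IH)
      (use Cons.prems in auto)
  then show ?case by (simp add: EE_sym)
qed

lemma Xs_comm: "set ls \<subseteq> {1..n} \<Longrightarrow> set ms \<subseteq> {1..n} \<Longrightarrow> EE (emul (Xs ls) (Xs ms)) (emul (Xs ms) (Xs ls))"
proof (induction ls)
  case Nil then show ?case by (simp add: emul_unit_right valid_Xs)
next
  case (Cons a ls)
  show ?case unfolding Xs_Cons
    by (rule comm_prod, rule X_Xs_comm, (use Cons.prems in auto)[3], rule Cons.IH) (use Cons.prems in auto)
qed

lemma phi_Dn1: "1 \<le> m \<Longrightarrow> phi n (Dn m 1) x = (if x = 1 then m else if 2 \<le> x \<and> x \<le> m then x - 1 else x)"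
proof (induction m)
  case 0 then show ?case by simp
next
  case (Suc m)
  show ?case
  proof (cases "m = 0")
    case True then show ?thesis by (simp add: Dn_def)
  next
    case False
    then have d: "Dn (Suc m) 1 = m # Dn m 1" by (simp add: Dn_def)
    have IH: "phi n (Dn m 1) x = (if x = 1 then m else if 2 \<le> x \<and> x \<le> m then x - 1 else x)"
      using Suc.IH False by simp
    have st: "phi n (Dn (Suc m) 1) x = transpose m (Suc m) (phi n (Dn m 1) x)"
      unfolding d using False by (simp add: phi_gen_def)
    consider "x = 1" | "2 \<le> x \<and> x \<le> m" | "x = Suc m" | "x \<noteq> 1 \<and> \<not> (2 \<le> x \<and> x \<le> Suc m)" by linarith
    then show ?thesis
    proof cases
      case 1 then show ?thesis unfolding st IH by simp
    next
      case 2 then show ?thesis unfolding st IH by (auto simp: transpose_def)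
    next
      case 3 then show ?thesis unfolding st IH using False by (simp add: transpose_def)
    next
      case 4 then show ?thesis unfolding st IH using False by (auto simp: transpose_def)
    qed
  qed
qed

lemma phi_ext_x1: "phi_ext x1 = id"
proof
  fix x
  have c1: "cyc 1 y = (if 1 \<le> y \<and> y < n then y + 1 else if y = n then 1 else y)" for y
  proof (cases "1 \<le> y \<and> y \<le> n")
    case True
    show ?thesis
    proof (cases "y = n")
      case True then show ?thesis using n2 by (simp add: cyc_def)
    next
      case False
      then have "(int y - 1 + 1) mod int n = int y" using True by (simp add: mod_pos_pos_trivial)
      then show ?thesis using True False by (simp add: cyc_def)
    qed
  next
    case False then show ?thesis using n2 by (auto simp: cyc_def)
  qed
  have p: "phi n Cw x = (if x = 1 then n else if 2 \<le> x \<and> x \<le> n then x - 1 else x)"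
    unfolding Cw_def by (rule phi_Dn1) (use n2 in simp)
  have e: "phi_ext x1 x = cyc 1 (phi n Cw x)" by (simp add: phi_ext_def x1_def)
  consider "x = 1" | "2 \<le> x \<and> x \<le> n" | "x = 0 \<or> n < x" by linarith
  then show "phi_ext x1 x = id x"
  proof cases
    case 1 then show ?thesis unfolding e p c1 using n2 by simp
  next
    case 2 then show ?thesis unfolding e p c1 using n2 by auto
  next
    case 3 then show ?thesis unfolding e p c1 using n2 by auto
  qed
qed

lemma phi_ext_W [simp]: "phi_ext (0, v) = phi n v"
  by (simp add: phi_ext_def cyc_zero)

lemma phi_cancel: "set w \<subseteq> {..<n} \<Longrightarrow> phi n w \<circ> phi n (rev w) = id"
  using phi_inv[OF aff_eq_cancel[of w n]] by simp

lemma phi_ext_X: "j \<le> n \<Longrightarrow> phi_ext (X j) = id"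
proof -
  assume j: "j \<le> n"
  have v: "set (Dn j 1) \<subseteq> {..<n}" using j by auto
  have "phi_ext (X j) = phi n (Dn j 1) \<circ> (phi_ext x1 \<circ> phi n (rev (Dn j 1)))"
    unfolding X_def using v valid_x1 by (simp add: phi_ext_mul)
  also have "\<dots> = id" using phi_cancel[OF v] by (simp add: phi_ext_x1)
  finally show ?thesis .
qed

lemma phi_ext_Xs: "set ls \<subseteq> {1..n} \<Longrightarrow> phi_ext (Xs ls) = id"
proof (induction ls)
  case Nil then show ?case by simp
next
  case (Cons a ls)
  then show ?case using valid_X[of a] by (simp add: phi_ext_mul phi_ext_X)
qed

section \<open>Normal forms\<close>

definition Z :: "nat \<Rightarrow> int \<times> nat list" where
  "Z q = (- (int n * int q), [])"

lemma rho_nmult: "set w \<subseteq> {..<n} \<Longrightarrow> rho_pow n (int n * m) w = w"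
proof (induction w)
  case Nil then show ?case by simp
next
  case (Cons i w)
  then have "(int i + int n * m) mod int n = int i" by (simp add: mod_pos_pos_trivial)
  then show ?case using Cons by simp
qed

lemma Z_central: "set (snd p) \<subseteq> {..<n} \<Longrightarrow> emul p (Z q) = emul (Z q) p"
proof -
  assume v: "set (snd p) \<subseteq> {..<n}"
  have "rho_pow n (- (- (int n * int q))) (snd p) = snd p"
    using rho_nmult[OF v, of "int q"] by simp
  then show ?thesis by (simp add: emul_def Z_def)
qed

lemma Z_Z: "emul (Z a) (Z b) = Z (a + b)"
  by (simp add: emul_def Z_def algebra_simps)

lemma valid_Z: "set (snd (Z q)) \<subseteq> {..<n}"
  by (simp add: Z_def)

lemma phi_ext_Z: "phi_ext (Z q) = id"
proof -
  have "cyc (- (int n * int q)) = cyc (int n * (- int q))" by simp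
  then show ?thesis using cyc_mult[of "- int q"] by (simp add: phi_ext_def Z_def)
qed

definition NF :: "nat \<Rightarrow> nat list \<Rightarrow> nat list \<Rightarrow> int \<times> nat list" where
  "NF q ls v = emul (emul (Z q) (Xs ls)) (0, v)"

definition NFP :: "int \<times> nat list \<Rightarrow> bool" where
  "NFP e \<longleftrightarrow> (\<exists>q ls v. set ls \<subseteq> {1..n} \<and> set v \<subseteq> {1..<n} \<and> EE e (NF q ls v))"

lemma valid_NF: "set v \<subseteq> {..<n} \<Longrightarrow> set (snd (NF q ls v)) \<subseteq> {..<n}"
  unfolding NF_def by (intro valid_emul) simp

lemma NFP_cong: "EE e e' \<Longrightarrow> NFP e' \<Longrightarrow> NFP e"
  unfolding NFP_def using EE_trans by blast

lemma NFP_mul: "NFP e \<Longrightarrow> (\<And>q ls v. set ls \<subseteq> {1..n} \<Longrightarrow> set v \<subseteq> {1..<n} \<Longrightarrow> NFP (emul (NF q ls v) p)) \<Longrightarrow> NFP (emul e p)"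
  unfolding NFP_def[of e] by (metis NFP_cong emul_cong1)

lemma NFP_I: "set ls \<subseteq> {1..n} \<Longrightarrow> set v \<subseteq> {1..<n} \<Longrightarrow> EE e (NF q ls v) \<Longrightarrow> NFP e"
  unfolding NFP_def by blast

lemma nf_letter1: "1 \<le> i \<Longrightarrow> i < n \<Longrightarrow> NFP e \<Longrightarrow> NFP (emul e (0, [i]))"
proof (erule NFP_mul)
  fix q ls v assume i: "1 \<le> i" "i < n" and ls: "set ls \<subseteq> {1..n}" and v: "set v \<subseteq> {1..<n}"
  have "emul (NF q ls v) (0, [i]) = NF q ls (v @ [i])"
    unfolding NF_def using v by (simp add: emul_assoc W_app subset_iff)
  then show "NFP (emul (NF q ls v) (0, [i]))" using ls v i by (intro NFP_I[of ls "v @ [i]" _ q]) auto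
qed

lemma tau_fact: "EE (1, []) (emul x1 (0, rev Cw))"
  using valid_Cw aff_eq_cancel[OF valid_Cw] by (simp add: x1_def emul_def rho_zero EE_def aff_eq.sym)

lemma nf_tau: "NFP e \<Longrightarrow> NFP (emul e (1, []))"
proof (erule NFP_mul)
  fix q ls v assume ls: "set ls \<subseteq> {1..n}" and v: "set v \<subseteq> {1..<n}"
  have v': "set v \<subseteq> {..<n}" using v by auto
  have r: "1 \<le> phi n v 1" "phi n v 1 \<le> n" using phi_range[OF v', of 1] n2 by auto
  have "EE (emul (NF q ls v) (1, [])) (emul (NF q ls v) (emul (X 1) (0, rev Cw)))"
    unfolding X_one by (rule emul_cong2[OF tau_fact])
  also have "\<dots> = emul (emul (Z q) (Xs ls)) (emul (emul (0, v) (X 1)) (0, rev Cw))"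
    by (simp add: NF_def emul_assoc)
  also have "EE \<dots> (emul (emul (Z q) (Xs ls)) (emul (emul (X (phi n v 1)) (0, v)) (0, rev Cw)))"
    by (rule emul_cong2, rule emul_cong1, rule L1w[OF v]) (use n2 in auto)
  also have "\<dots> = emul (emul (Z q) (emul (Xs ls) (X (phi n v 1)))) (emul (0, v) (0, rev Cw))"
    by (simp add: emul_assoc)
  also have "\<dots> = NF q (ls @ [phi n v 1]) (v @ rev Cw)"
    using r v' by (simp add: NF_def Xs_snoc W_app)
  finally show "NFP (emul (NF q ls v) (1, []))"
    by (rule NFP_I[rotated 2]) (use ls r v in \<open>auto simp: Cw_def\<close>)
qed

lemma nf_Z: "NFP e \<Longrightarrow> NFP (emul e (Z 1))"
proof (erule NFP_mul)
  fix q ls v assume ls: "set ls \<subseteq> {1..n}" and v: "set v \<subseteq> {1..<n}"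
  have v': "set v \<subseteq> {..<n}" using v by auto
  have "emul (NF q ls v) (Z 1) = emul (Z 1) (NF q ls v)" using valid_NF[OF v'] by (rule Z_central)
  also have "\<dots> = NF (1 + q) ls v" by (simp add: NF_def emul_assoc[symmetric] Z_Z)
  finally show "NFP (emul (NF q ls v) (Z 1))" using ls v by (intro NFP_I[of ls v _ "1 + q"]) auto
qed

lemma nf_taupow: "NFP e \<Longrightarrow> NFP (emul e (int m, []))"
proof (induction m)
  case 0
  then show ?case
  proof (rule NFP_mul)
    fix q ls v assume ls: "set ls \<subseteq> {1..n}" and v: "set v \<subseteq> {1..<n}"
    then have "emul (NF q ls v) (int 0, []) = NF q ls v" using valid_NF[of v] by (simp add: emul_unit_right subset_iff)
    then show "NFP (emul (NF q ls v) (int 0, []))" using ls v by (intro NFP_I[of ls v _ q]) auto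
  qed
next
  case (Suc m)
  have "emul e (int (Suc m), []) = emul (emul e (int m, [])) (1, [])" by (simp add: emul_assoc emul_def)
  then show ?case using nf_tau[OF Suc.IH[OF Suc.prems]] by simp
qed

lemma nf_tauinv: "NFP e \<Longrightarrow> NFP (emul e (-1, []))"
proof -
  assume e: "NFP e"
  have "emul e (-1, []) = emul (emul e (int (n - 1), [])) (Z 1)"
    using n2 by (simp add: emul_assoc emul_def Z_def of_nat_diff)
  then show ?thesis using nf_Z[OF nf_taupow[OF e]] by simp
qed

lemma nf_letter: "i < n \<Longrightarrow> NFP e \<Longrightarrow> NFP (emul e (0, [i]))"
proof (cases "i = 0")
  case True
  assume e: "NFP e"
  have r: "rho_pow n 1 [n - 1] = [0]" using n2 by (simp add: of_nat_diff)
  have "emul e (0, [0]) = emul (emul (emul e (1, [])) (0, [n - 1])) (-1, [])"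
    using r by (simp add: emul_assoc emul_def)
  then show ?thesis using True nf_tauinv[OF nf_letter1[OF _ _ nf_tau[OF e], of "n - 1"]] n2 by simp
next
  case False
  assume "i < n" "NFP e"
  then show ?thesis using nf_letter1 False by simp
qed

lemma nf_all: "set u \<subseteq> {..<n} \<Longrightarrow> NFP (- int a, u)"
proof (induction u rule: rev_induct)
  case Nil
  show ?case
  proof (induction a)
    case 0
    have "EE (- int 0, []) (NF 0 [] [])" by (simp add: NF_def Z_def)
    then show ?case by (intro NFP_I[of "[]" "[]" _ 0]) auto
  next
    case (Suc a)
    have "(- int (Suc a), []) = emul (- int a, []) (-1, [])" by (simp add: emul_def)
    then show ?case using nf_tauinv[OF Suc.IH] by simp
  qed
next
  case (snoc i u)
  then have "(- int a, u @ [i]) = emul (- int a, u) (0, [i])" by (simp add: emul_def rho_zero)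
  then show ?case using nf_letter snoc by simp
qed

lemma core_T:
  assumes u: "set u \<subseteq> {..<n}" and pu: "phi n u = cyc (int a)"
  shows "\<exists>q ls. set ls \<subseteq> {1..n} \<and> EE (- int a, u) (emul (Z q) (Xs ls))"
proof -
  obtain q ls v where ls: "set ls \<subseteq> {1..n}" and v: "set v \<subseteq> {1..<n}"
    and E: "EE (- int a, u) (NF q ls v)"
    using nf_all[OF u, of a] unfolding NFP_def by blast
  have v': "set v \<subseteq> {..<n}" using v by auto
  have vZX: "set (snd (emul (Z q) (Xs ls))) \<subseteq> {..<n}" by (rule valid_emul[OF valid_Xs])
  have "phi_ext (- int a, u) = cyc (- int a) \<circ> cyc (int a)" by (simp add: phi_ext_def pu)
  also have "\<dots> = id" by (rule cyc_inv2)
  finally have 1: "phi_ext (- int a, u) = id" .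
  have "phi_ext (NF q ls v) = (phi_ext (Z q) \<circ> phi_ext (Xs ls)) \<circ> phi n v"
    unfolding NF_def using vZX valid_Z by (simp add: phi_ext_mul)
  also have "\<dots> = phi n v" using ls by (simp add: phi_ext_Z phi_ext_Xs)
  finally have "phi n v = id" using phi_ext_EE[OF E] 1 by simp
  then have "aff_eq n v []" using Sn_kernel[of n v] v by simp
  then have "EE (NF q ls v) (NF q ls [])" unfolding NF_def by (intro emul_cong2 EE_W)
  also have "NF q ls [] = emul (Z q) (Xs ls)" unfolding NF_def using vZX by (rule emul_unit_right)
  finally show ?thesis using E ls EE_trans by blast
qed

lemma ZX_prod: "emul (emul (Z q) (Xs ls)) (emul (Z q') (Xs ls')) = emul (Z (q + q')) (emul (Xs ls) (Xs ls'))"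
proof -
  have "emul (emul (Z q) (Xs ls)) (emul (Z q') (Xs ls')) = emul (Z q) (emul (emul (Xs ls) (Z q')) (Xs ls'))"
    by (simp add: emul_assoc)
  also have "emul (Xs ls) (Z q') = emul (Z q') (Xs ls)" by (rule Z_central[OF valid_Xs])
  also have "emul (Z q) (emul (emul (Z q') (Xs ls)) (Xs ls')) = emul (emul (Z q) (Z q')) (emul (Xs ls) (Xs ls'))"
    by (simp add: emul_assoc)
  finally show ?thesis by (simp add: Z_Z)
qed

lemma core_comm:
  assumes u: "set u \<subseteq> {..<n}" and pu: "phi n u = cyc (int a)"
    and v: "set v \<subseteq> {..<n}" and pv: "phi n v = cyc (int b)"
  shows "aff_eq n (rho_pow n (int b) u @ v) (rho_pow n (int a) v @ u)"
proof -
  obtain q ls where ls: "set ls \<subseteq> {1..n}" and E1: "EE (- int a, u) (emul (Z q) (Xs ls))"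
    using core_T[OF u pu] by blast
  obtain q' ls' where ls': "set ls' \<subseteq> {1..n}" and E2: "EE (- int b, v) (emul (Z q') (Xs ls'))"
    using core_T[OF v pv] by blast
  have "EE (emul (- int a, u) (- int b, v)) (emul (emul (Z q) (Xs ls)) (emul (Z q') (Xs ls')))"
    by (rule emul_cong[OF E1 E2])
  also have "\<dots> = emul (Z (q + q')) (emul (Xs ls) (Xs ls'))" by (rule ZX_prod)
  also have "EE \<dots> (emul (Z (q + q')) (emul (Xs ls') (Xs ls)))" by (rule emul_cong2[OF Xs_comm[OF ls ls']])
  also have "\<dots> = emul (Z (q' + q)) (emul (Xs ls') (Xs ls))" by (simp add: add.commute)
  also have "\<dots> = emul (emul (Z q') (Xs ls')) (emul (Z q) (Xs ls))" by (rule ZX_prod[symmetric])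
  also have "EE \<dots> (emul (- int b, v) (- int a, u))" by (rule emul_cong[OF EE_sym[OF E2] EE_sym[OF E1]])
  finally show ?thesis by (simp add: EE_def emul_def)
qed

end

lemma lemma2p1_aux:
  fixes n k1 k2 :: nat and g1 g2 :: "nat list"
  assumes n2: "n \<ge> 2"
    and "aff_word n g1" and "aff_word n g2"
    and "glide_offset n g1 k1" and "glide_offset n g2 k2"
  shows "aff_eq n (g2 @ g1) (rho_pow n (int k2) g1 @ rho_pow n (- int k1) g2)"
proof -
  have v1: "set g1 \<subseteq> {..<n}" and v2: "set g2 \<subseteq> {..<n}" using assms by (auto simp: aff_word_def)
  have p1: "phi n g1 = cyc n (int k1)" by (rule glide_phi[OF n2 v1 assms(4)])
  have p2: "phi n g2 = cyc n (int k2)" by (rule glide_phi[OF n2 v2 assms(5)])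
  define v where "v = rho_pow n (- int k1) g2"
  have vv: "set v \<subseteq> {..<n}" unfolding v_def by (rule rho_valid[OF n2])
  have pv: "phi n v = cyc n (int k2)"
  proof
    fix x
    show "phi n v x = cyc n (int k2) x"
      unfolding v_def using phi_rho[OF n2 v2, of "- int k1" x] p2 by (simp add: cyc_add[OF n2])
  qed
  have "aff_eq n (rho_pow n (int k2) g1 @ v) (rho_pow n (int k1) v @ g1)"
    by (rule core_comm[OF n2 v1 p1 vv pv])
  moreover have "rho_pow n (int k1) v = g2" unfolding v_def by (rule rho_inverse[OF n2 v2])
  ultimately show ?thesis unfolding v_def by (simp add: aff_eq.sym)
qed

theorem lemma2p1:
  fixes n k1 k2 :: nat and g1 g2 :: "nat list"
  assumes "n \<ge> 2"
    and "aff_word n g1" and "aff_word n g2"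
    and "glide_offset n g1 k1" and "glide_offset n g2 k2"
  shows "aff_eq n (g2 @ g1) (rho_pow n (int k2) g1 @ rho_pow n (- int k1) g2)"
  using lemma2p1_aux[OF assms] .

end
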